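(* In the setting of the periodic log-normal approximation (below), with $\boldsymbol\Phi_{D^\star}(\theta)\in\overline{\mathbf{CM}}(n)$, suppose at least one of the following holds: (1) $\omega=n$; (2) $\delta_{k_3}=n$ for some $k_3\in\{1,\dots,\omega\}$; (3) $\overline\omega=n$; (4) $\overline\delta_{k_4}=n$ for some $k_4\in\{1,\dots,\overline\omega\}$. Then $\Sigma^d_\epsilon(t)$ is positive definite for every $t\ge0$.
   Context: Setting: $D^\star:[0,\infty)\to\mathbb{R}^{n\times n}$, $\Lambda^\star:[0,\infty)\to\mathbb{R}^{n\times N}$ continuous and $\theta$-periodic (in the paper, $D^\star(t)$ is the Jacobian with respect to $\ln\mathbf{x}$ of $F_i(t,\mathbf{x})=f_i(t,\mathbf{x})/x_i-\frac\epsilon2\sum_jg_{ij}^2(t,\mathbf{x})$ at $e^{\boldsymbol\Psi^\star_\epsilon(t)}$ and $\Lambda^\star(t)=(g_{ij}(t,e^{\boldsymbol\Psi^\star_\epsilon(t)}))$). $\boldsymbol\Phi_{D^\star}$ is the fundamental matrix with $\boldsymbol\Phi_{D^\star}(0)=\mathbf{I}_n$; $\overline{\mathbf{CM}}(n)$ is the set of real $n\times n$ matrices with all eigenvalues of modulus in $(0,1)$. $\Upsilon(t)=\int_0^t(\boldsymbol\Phi_{D^\star}(t)\boldsymbol\Phi_{D^\star}^{-1}(s)\Lambda^\star(s))(\cdots)^{\top}ds$; $\Sigma^d_\epsilon(0)$ is the unique symmetric solution of $\boldsymbol\Phi_{D^\star}(\theta)\Sigma\boldsymbol\Phi_{D^\star}(\theta)^\top-\Sigma+\epsilon\Upsilon(\theta)=\mathbb{O}$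 and $\Sigma^d_\epsilon(t)=\boldsymbol\Phi_{D^\star}(t)\Sigma^d_\epsilon(0)\boldsymbol\Phi_{D^\star}^\top(t)+\epsilon\Upsilon(t)$, $\epsilon>0$. $E_{n,j}$ is the diagonal matrix with a single $1$ at $(j,j)$; $\mathbf{u}_j$ the $j$-th standard basis vector. $\omega=\operatorname{rank}\Upsilon(\theta)$; $\mathcal{H}_\epsilon$ orthogonal with $\mathcal{H}_\epsilon\Upsilon(\theta)\mathcal{H}_\epsilon^\top=\sum_{k=1}^\omega\lambda_k^\oplus E_{n,\mu_k}$, $\lambda_k^\oplus>0$, $\mu_1<\dots<\mu_\omega$; $A_{[3]}=\mathcal{H}_\epsilon\boldsymbol\Phi_{D^\star}(\theta)\mathcal{H}_\epsilon^{-1}$ and $\delta_k:=\dim\operatorname{span}\{A_{[3]}^j\mathbf{u}_{\mu_k}:j\ge0\}$. Further $\lambda^\oplus_\vartriangle>0$, $\overline\omega\in\{0,\dots,\omega\}$ and indices $\overline\mu_1<\dots<\overline\mu_{\overline\omega}$ are such that $\Upsilon(\theta)\succeq\lambda^\oplus_\vartriangle\sum_{k=1}^{\overline\omega}E_{n,\overline\mu_k}$, and $\overline\delta_k:=\dim\operatorname{span}\{\boldsymbol\Phi_{D^\star}(\theta)^j\mathbf{u}_{\overline\mu_k}:j\ge0\}$. *)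

theory Defs
  imports "HOL-Analysis.Analysis"
begin

text \<open>Complex eigenvalues of a real square matrix.\<close>
definition cmat :: "real^'n^'n \<Rightarrow> complex^'n^'n" where
  "cmat A = (\<chi> i j. complex_of_real (A $ i $ j))"

definition is_eigenvalue :: "real^'n^'n \<Rightarrow> complex \<Rightarrow> bool" where
  "is_eigenvalue A z \<longleftrightarrow> (\<exists>v::complex^'n. v \<noteq> 0 \<and> cmat A *v v = z *s v)"

text \<open>The set CM-bar(n): all eigenvalues have modulus in (0,1).\<close>
definition CMbar :: "(real^'n^'n) set" where
  "CMbar = {A. \<forall>z. is_eigenvalue A z \<longrightarrow> 0 < cmod z \<and> cmod z < 1}"

definition pos_def :: "real^'n^'n \<Rightarrow> bool" where
  "pos_def A \<longleftrightarrow> transpose A = A \<and> (\<forall>x. x \<noteq> 0 \<longrightarrow> x \<bullet> (A *v x) > 0)"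

definition pos_semidef :: "real^'n^'n \<Rightarrow> bool" where
  "pos_semidef A \<longleftrightarrow> transpose A = A \<and> (\<forall>x. x \<bullet> (A *v x) \<ge> 0)"

text \<open>Loewner order: A \<succeq> B.\<close>
definition loewner_ge :: "real^'n^'n \<Rightarrow> real^'n^'n \<Rightarrow> bool" where
  "loewner_ge A B \<longleftrightarrow> pos_semidef (A - B)"

text \<open>E_{n,j}: diagonal matrix with a single 1 at (j,j).\<close>
definition Emat :: "'n \<Rightarrow> real^'n^'n" where
  "Emat j = (\<chi> i k. if i = j \<and> k = j then 1 else 0)"

text \<open>u_j: the j-th standard basis vector.\<close>
definition uvec :: "'n \<Rightarrow> real^'n" where
  "uvec j = axis j 1"

text \<open>dim span {A^j u : j \<ge> 0}.\<close>
definition krylov_dim :: "real^'n^'n \<Rightarrow> real^'n \<Rightarrow> nat" where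
  "krylov_dim A u = dim (span (range (\<lambda>j::nat. (((*v) A) ^^ j) u)))"

text \<open>Fundamental matrix of x' = D(t) x with Phi(0) = I.\<close>
definition fundamental_matrix :: "(real \<Rightarrow> real^'n^'n) \<Rightarrow> (real \<Rightarrow> real^'n^'n) \<Rightarrow> bool" where
  "fundamental_matrix D Phi \<longleftrightarrow> Phi 0 = mat 1 \<and>
     (\<forall>t\<ge>0. (Phi has_vector_derivative (D t ** Phi t)) (at t within {0..}))"

definition Upsilon :: "(real \<Rightarrow> real^'n^'n) \<Rightarrow> (real \<Rightarrow> real^'N^'n) \<Rightarrow> real \<Rightarrow> real^'n^'n" where
  "Upsilon Phi Lam t = integral {0..t}
     (\<lambda>s. let M = Phi t ** matrix_inv (Phi s) ** Lam s in M ** transpose M)"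

text \<open>Sigma^d_eps(0): the unique symmetric solution of the discrete Lyapunov equation.\<close>
definition Sigma_d0 :: "(real \<Rightarrow> real^'n^'n) \<Rightarrow> (real \<Rightarrow> real^'N^'n) \<Rightarrow> real \<Rightarrow> real \<Rightarrow> real^'n^'n" where
  "Sigma_d0 Phi Lam \<theta> \<epsilon> = (THE S. transpose S = S \<and>
     Phi \<theta> ** S ** transpose (Phi \<theta>) - S + \<epsilon> *\<^sub>R Upsilon Phi Lam \<theta> = 0)"

definition Sigma_d :: "(real \<Rightarrow> real^'n^'n) \<Rightarrow> (real \<Rightarrow> real^'N^'n) \<Rightarrow> real \<Rightarrow> real \<Rightarrow> real \<Rightarrow> real^'n^'n" where
  "Sigma_d Phi Lam \<theta> \<epsilon> t = Phi t ** Sigma_d0 Phi Lam \<theta> \<epsilon> ** transpose (Phi t) + \<epsilon> *\<^sub>R Upsilon Phi Lam t"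

end

theory Submission
  imports Defs "Jordan_Normal_Form.Spectral_Radius"
begin


no_notation Matrix.vec_index (infixl "$" 100)
no_notation Matrix.scalar_prod (infix "\<bullet>" 70)
hide_const (open) Matrix.mat Matrix.orthogonal Matrix.vec Matrix.row Matrix.col Determinant.det Matrix.rows

definition mpow :: "real^'n^'n \<Rightarrow> nat \<Rightarrow> real^'n^'n" where
  "mpow A k = (((**) A) ^^ k) (mat 1)"

lemma mpow_0[simp]: "mpow A 0 = mat 1" by (simp add: mpow_def)
lemma mpow_Suc: "mpow A (Suc k) = A ** mpow A k" by (simp add: mpow_def)
lemma mpow_Suc': "mpow A (Suc k) = mpow A k ** A"
  by (induction k) (simp_all add: mpow_Suc matrix_mul_assoc)

lemma mpow_scale: "mpow (c *\<^sub>R A) k = (c ^ k) *\<^sub>R mpow A k"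
  by (induction k) (simp_all add: mpow_Suc matrix_scalar_ac scalar_matrix_assoc[symmetric])

definition tm :: "(nat \<Rightarrow> 'n) \<Rightarrow> nat \<Rightarrow> real^'n^'n \<Rightarrow> complex Matrix.mat" where
  "tm g N X = Matrix.mat N N (\<lambda>(i,j). complex_of_real (X $ g i $ g j))"

lemma tm_carrier[simp]: "tm g N X \<in> carrier_mat N N" "dim_row (tm g N X) = N" "dim_col (tm g N X) = N"
  by (auto simp: tm_def)

lemma tm_index[simp]: "i < N \<Longrightarrow> j < N \<Longrightarrow> tm g N X $$ (i,j) = complex_of_real (X $ g i $ g j)"
  by (simp add: tm_def)

lemma tm_mult:
  assumes g: "bij_betw g {0..<N} (UNIV::'n::finite set)"
  shows "tm g N (X ** Y) = tm g N X * tm g N (Y::real^'n^'n)"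
proof (rule eq_matI)
  fix i j assume i: "i < dim_row (tm g N X * tm g N Y)" and j: "j < dim_col (tm g N X * tm g N Y)"
  then have i': "i < N" and j': "j < N" by auto
  have "(tm g N X * tm g N Y) $$ (i,j) = (\<Sum>l\<in>{0..<N}. complex_of_real (X $ g i $ g l) * complex_of_real (Y $ g l $ g j))"
    using i' j' by (simp add: scalar_prod_def)
  also have "\<dots> = (\<Sum>c\<in>UNIV. complex_of_real (X $ g i $ c) * complex_of_real (Y $ c $ g j))"
    by (rule sum.reindex_bij_betw[OF g])
  also have "\<dots> = tm g N (X ** Y) $$ (i,j)"
    using i' j' by (simp add: matrix_matrix_mult_def)
  finally show "tm g N (X ** Y) $$ (i, j) = (tm g N X * tm g N Y) $$ (i, j)" by simp
qed auto

lemma tm_one: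
  assumes g: "bij_betw g {0..<N} (UNIV::'n::finite set)"
  shows "tm g N (mat 1 :: real^'n^'n) = 1\<^sub>m N"
proof (rule eq_matI)
  fix i j assume "i < dim_row (1\<^sub>m N :: complex Matrix.mat)" "j < dim_col (1\<^sub>m N :: complex Matrix.mat)"
  then have i: "i < N" and j: "j < N" by auto
  have "g i = g j \<longleftrightarrow> i = j" using g i j unfolding bij_betw_def inj_on_def by auto
  then show "tm g N (mat 1 :: real^'n^'n) $$ (i, j) = 1\<^sub>m N $$ (i, j)"
    using i j by (simp add: Finite_Cartesian_Product.mat_def)
qed auto

lemma tm_pow:
  assumes g: "bij_betw g {0..<N} (UNIV::'n::finite set)"
  shows "tm g N A ^\<^sub>m k = tm g N (mpow (A::real^'n^'n) k)"
proof (induction k)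
  case 0 then show ?case using tm_one[OF g] by simp
next
  case (Suc k) then show ?case by (simp add: mpow_Suc' tm_mult[OF g])
qed

lemma tm_eig:
  assumes g: "bij_betw g {0..<N} (UNIV::'n::finite set)"
    and ev: "eigenvalue (tm g N (B::real^'n^'n)) e"
  shows "is_eigenvalue B e"
proof -
  obtain v where v: "v \<in> carrier_vec N" "v \<noteq> 0\<^sub>v N" "tm g N B *\<^sub>v v = e \<cdot>\<^sub>v v"
    using ev unfolding eigenvalue_def eigenvector_def by auto
  define gi where "gi = the_inv_into {0..<N} g"
  have gi: "gi a < N" "g (gi a) = a" for a
  proof -
    have "gi a \<in> {0..<N}" using g unfolding gi_def bij_betw_def by (metis UNIV_I subset_refl the_inv_into_into)
    moreover have "g (gi a) = a" using g unfolding gi_def bij_betw_def by (metis UNIV_I f_the_inv_into_f)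
    ultimately show "gi a < N" "g (gi a) = a" by auto
  qed
  have gi2: "gi (g i) = i" if "i < N" for i
    using g that unfolding gi_def bij_betw_def by (auto intro: the_inv_into_f_f)
  define w :: "complex^'n" where "w = (\<chi> a. Matrix.vec_index v (gi a))"
  have "w \<noteq> 0"
  proof
    assume w0: "w = 0"
    have "v = 0\<^sub>v N"
    proof (rule eq_vecI)
      fix i assume "i < dim_vec (0\<^sub>v N :: complex Matrix.vec)"
      then have i: "i < N" by simp
      have "w $ g i = 0" using w0 by simp
      then show "Matrix.vec_index v i = Matrix.vec_index (0\<^sub>v N) i" using i gi2[OF i] unfolding w_def by simp
    qed (use v in simp)
    with v show False by simp
  qed
  moreover have "cmat B *v w = e *s w"
  proof (subst Finite_Cartesian_Product.vec_eq_iff, rule allI)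
    fix a
    have "Matrix.vec_index (tm g N B *\<^sub>v v) (gi a) = Matrix.vec_index (e \<cdot>\<^sub>v v) (gi a)" using v by simp
    then have "(\<Sum>l\<in>{0..<N}. complex_of_real (B $ a $ g l) * Matrix.vec_index v l) = e * Matrix.vec_index v (gi a)"
      using gi[of a] v(1) by (simp add: scalar_prod_def)
    moreover have "(\<Sum>l\<in>{0..<N}. complex_of_real (B $ a $ g l) * Matrix.vec_index v l)
        = (\<Sum>l\<in>{0..<N}. complex_of_real (B $ a $ g l) * Matrix.vec_index v (gi (g l)))"
      by (rule sum.cong) (auto simp: gi2)
    moreover have "\<dots> = (\<Sum>c\<in>UNIV. complex_of_real (B $ a $ c) * Matrix.vec_index v (gi c))"
      by (rule sum.reindex_bij_betw[OF g])
    ultimately show "(cmat B *v w) $ a = (e *s w) $ a"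
      unfolding w_def cmat_def by (simp add: matrix_vector_mult_def)
  qed
  ultimately show ?thesis unfolding is_eigenvalue_def by blast
qed

lemma tm_scale_eig:
  assumes ev: "eigenvalue (tm g N (c *\<^sub>R B)) e" and c: "c \<noteq> 0"
  shows "eigenvalue (tm g N (B::real^'n^'n)) (e / complex_of_real c)"
proof -
  obtain v where v: "v \<in> carrier_vec N" "v \<noteq> 0\<^sub>v N" "tm g N (c *\<^sub>R B) *\<^sub>v v = e \<cdot>\<^sub>v v"
    using ev unfolding eigenvalue_def eigenvector_def by auto
  have "tm g N B *\<^sub>v v = (e / complex_of_real c) \<cdot>\<^sub>v v"
  proof (rule eq_vecI)
    fix i assume "i < dim_vec ((e / complex_of_real c) \<cdot>\<^sub>v v)"
    then have i: "i < N" using v by simp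
    have "Matrix.vec_index (tm g N (c *\<^sub>R B) *\<^sub>v v) i = Matrix.vec_index (e \<cdot>\<^sub>v v) i" using v by simp
    then have "(\<Sum>l\<in>{0..<N}. complex_of_real c * complex_of_real (B $ g i $ g l) * Matrix.vec_index v l) = e * Matrix.vec_index v i"
      using i v(1) by (simp add: scalar_prod_def)
    then have "complex_of_real c * (\<Sum>l\<in>{0..<N}. complex_of_real (B $ g i $ g l) * Matrix.vec_index v l) = e * Matrix.vec_index v i"
      by (simp add: sum_distrib_left mult.assoc)
    then have "(\<Sum>l\<in>{0..<N}. complex_of_real (B $ g i $ g l) * Matrix.vec_index v l) = e / complex_of_real c * Matrix.vec_index v i"
      using c by (simp add: field_simps)
    then show "Matrix.vec_index (tm g N B *\<^sub>v v) i = Matrix.vec_index ((e / complex_of_real c) \<cdot>\<^sub>v v) i"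
      using i v by (simp add: scalar_prod_def)
  qed (use v in simp)
  then show ?thesis unfolding eigenvalue_def eigenvector_def using v by auto
qed

lemma CMbar_decay:
  fixes A :: "real^'n^'n"
  assumes CM: "A \<in> CMbar"
  shows "(\<lambda>k. mpow A k) \<longlonglongrightarrow> 0"
proof -
  define N where "N = CARD('n)"
  obtain g :: "nat \<Rightarrow> 'n" where g: "bij_betw g {0..<N} UNIV"
    using ex_bij_betw_nat_finite[of "UNIV::'n set"] unfolding N_def by auto
  have N0: "N > 0" unfolding N_def by simp
  define M where "M = tm g N A"
  have Mc: "M \<in> carrier_mat N N" unfolding M_def by simp
  define \<rho> where "\<rho> = spectral_radius M"
  obtain e0 where e0: "eigenvalue M e0" "\<rho> = norm e0"
    using spectral_radius_mem_max(1)[OF Mc N0] unfolding \<rho>_def spectrum_def by auto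
  have "is_eigenvalue A e0" using tm_eig[OF g] e0 unfolding M_def by blast
  then have \<rho>1: "\<rho> < 1" using CM e0 unfolding CMbar_def by auto
  have \<rho>0: "\<rho> \<ge> 0" using e0 by simp
  define r where "r = (1 + \<rho>) / 2"
  have r: "0 < r" "r < 1" "\<rho> < r" using \<rho>0 \<rho>1 unfolding r_def by auto
  define M' where "M' = tm g N ((1/r) *\<^sub>R A)"
  have M'c: "M' \<in> carrier_mat N N" unfolding M'_def by simp
  obtain e1 where e1: "eigenvalue M' e1" "spectral_radius M' = norm e1"
    using spectral_radius_mem_max(1)[OF M'c N0] unfolding spectrum_def by auto
  have "eigenvalue M (e1 / complex_of_real (1/r))"
    using tm_scale_eig[of g N "1/r" A e1] e1 r unfolding M'_def M_def by auto
  then have "norm (e1 / complex_of_real (1/r)) \<le> \<rho>"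
    unfolding \<rho>_def by (intro spectral_radius_mem_max(2)[OF Mc N0]) (auto simp: spectrum_def)
  then have "norm e1 * r \<le> \<rho>" using r by (simp add: norm_mult norm_divide)
  then have "norm e1 * r < 1 * r" using r by linarith
  then have "spectral_radius M' < 1" using e1 r by (simp add: mult_less_cancel_right)
  then obtain c where c: "\<forall>k. norm_bound (M' ^\<^sub>m k) c"
    using spectral_radius_jnf_norm_bound_less_1_upper_triangular[OF M'c] by blast
  define gi where "gi = the_inv_into {0..<N} g"
  have gi: "gi a < N" "g (gi a) = a" for a
  proof -
    have "gi a \<in> {0..<N}" using g unfolding gi_def bij_betw_def by (metis UNIV_I subset_refl the_inv_into_into)
    moreover have "g (gi a) = a" using g unfolding gi_def bij_betw_def by (metis UNIV_I f_the_inv_into_f)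
    ultimately show "gi a < N" "g (gi a) = a" by auto
  qed
  have bnd: "\<bar>mpow A k $ a $ b\<bar> \<le> c * r ^ k" for k a b
  proof -
    have "norm ((M' ^\<^sub>m k) $$ (gi a, gi b)) \<le> c"
      using c gi[of a] gi[of b] M'c unfolding norm_bound_def by auto
    moreover have "(M' ^\<^sub>m k) $$ (gi a, gi b) = complex_of_real ((1/r) ^ k * mpow A k $ a $ b)"
      unfolding M'_def tm_pow[OF g] mpow_scale using gi[of a] gi[of b] by simp
    moreover have "(1 / complex_of_real r) ^ k * complex_of_real (mpow A k $ a $ b) = complex_of_real ((1/r)^k * mpow A k $ a $ b)"
      by simp
    ultimately have "\<bar>(1/r) ^ k * mpow A k $ a $ b\<bar> \<le> c" by (metis norm_of_real)
    then have "\<bar>mpow A k $ a $ b\<bar> / r ^ k \<le> c" using r by (simp add: abs_mult power_one_over)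
    then show ?thesis using r by (simp add: divide_le_eq mult.commute)
  qed
  have rk: "(\<lambda>k. c * r ^ k) \<longlonglongrightarrow> 0"
    using r by (intro tendsto_mult_right_zero LIMSEQ_power_zero) auto
  show ?thesis
  proof (rule vec_tendstoI, rule vec_tendstoI)
    fix a b
    show "(\<lambda>k. mpow A k $ a $ b) \<longlonglongrightarrow> 0 $ a $ b"
      using Lim_null_comparison[OF _ rk, of "\<lambda>k. mpow A k $ a $ b"] bnd by simp
  qed
qed

lemma krylov_mpow: "(((*v) A) ^^ j) u = mpow A j *v u"
  by (induction j) (simp_all add: mpow_Suc matrix_vector_mul_assoc matrix_vector_mul_lid)

lemma tendsto_matmul:
  fixes f g :: "'a \<Rightarrow> real^'n^'n"
  assumes "(f \<longlongrightarrow> a) F" "(g \<longlongrightarrow> b) F"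
  shows "((\<lambda>x. f x ** g x) \<longlongrightarrow> a ** b) F"
proof (rule vec_tendstoI, rule vec_tendstoI)
  fix i j
  show "((\<lambda>x. (f x ** g x) $ i $ j) \<longlongrightarrow> (a ** b) $ i $ j) F"
    unfolding matrix_matrix_mult_def vec_lambda_beta
    by (intro tendsto_intros tendsto_vec_nth assms)
qed

lemma tendsto_transpose:
  fixes f :: "'a \<Rightarrow> real^'n^'n"
  assumes "(f \<longlongrightarrow> a) F"
  shows "((\<lambda>x. transpose (f x)) \<longlongrightarrow> transpose a) F"
proof (rule vec_tendstoI, rule vec_tendstoI)
  fix i j
  show "((\<lambda>x. transpose (f x) $ i $ j) \<longlongrightarrow> transpose a $ i $ j) F"
    unfolding transpose_def vec_lambda_beta
    by (intro tendsto_intros tendsto_vec_nth assms)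
qed

lemma tendsto_matvec:
  fixes f :: "'a \<Rightarrow> real^'n^'n" and g :: "'a \<Rightarrow> real^'n"
  assumes "(f \<longlongrightarrow> a) F" "(g \<longlongrightarrow> b) F"
  shows "((\<lambda>x. f x *v g x) \<longlongrightarrow> a *v b) F"
proof (rule vec_tendstoI)
  fix i
  show "((\<lambda>x. (f x *v g x) $ i) \<longlongrightarrow> (a *v b) $ i) F"
    unfolding matrix_vector_mult_def vec_lambda_beta
    by (intro tendsto_intros tendsto_vec_nth assms)
qed

lemma conj_pow_zero:
  fixes A X :: "real^'n^'n"
  assumes lim: "(\<lambda>k. mpow A k) \<longlonglongrightarrow> 0" and X: "X = A ** X ** transpose A"
  shows "X = 0"
proof -
  have eq: "X = mpow A k ** X ** transpose (mpow A k)" for k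
  proof (induction k)
    case 0 then show ?case by (simp add: matrix_mul_lid matrix_mul_rid transpose_mat)
  next
    case (Suc k)
    have "mpow A (Suc k) ** X ** transpose (mpow A (Suc k))
        = A ** (mpow A k ** X ** transpose (mpow A k)) ** transpose A"
      by (simp add: mpow_Suc matrix_transpose_mul matrix_mul_assoc)
    also have "\<dots> = X" using Suc X by simp
    finally show ?case by simp
  qed
  have "(\<lambda>k. mpow A k ** X ** transpose (mpow A k)) \<longlonglongrightarrow> 0 ** X ** transpose 0"
    by (intro tendsto_matmul tendsto_transpose lim tendsto_const)
  then have "(\<lambda>k. X) \<longlonglongrightarrow> 0 ** X ** transpose 0" using eq by simp
  then have "X = 0 ** X ** transpose 0" by (simp add: LIMSEQ_const_iff)
  then show ?thesis by (simp add: times0_left)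
qed

lemma matrix_add_rdistrib': "((B + C) ** A) = (B ** A) + (C ** (A::real^'n^'n))"
  by (vector matrix_matrix_mult_def sum.distrib[symmetric] field_simps)
lemma matrix_diff_rdistrib': "((B - C) ** A) = (B ** A) - (C ** (A::real^'n^'n))"
  by (vector matrix_matrix_mult_def sum_subtractf[symmetric] field_simps)
lemma matrix_diff_ldistrib': "(A ** (B - C)) = (A ** B) - (A ** (C::real^'n^'n))"
  by (vector matrix_matrix_mult_def sum_subtractf[symmetric] field_simps)

lemma lin_L: "linear (\<lambda>X::real^'n^'n. A ** X ** transpose A - X)"
  by (rule linearI) (simp_all add: matrix_add_ldistrib matrix_add_rdistrib' matrix_scalar_ac
      scalar_matrix_assoc[symmetric] algebra_simps)

lemma transpose_add': "transpose (A + B) = transpose A + transpose (B::real^'n^'n)"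
  by (simp add: transpose_def Finite_Cartesian_Product.vec_eq_iff)
lemma transpose_diff': "transpose (A - B) = transpose A - transpose (B::real^'n^'n)"
  by (simp add: transpose_def Finite_Cartesian_Product.vec_eq_iff)

lemma lyap_ex1:
  fixes A U :: "real^'n^'n"
  assumes lim: "(\<lambda>k. mpow A k) \<longlonglongrightarrow> 0" and U: "transpose U = U"
  shows "\<exists>!S. transpose S = S \<and> A ** S ** transpose A - S + c *\<^sub>R U = 0"
proof -
  define L where "L X = A ** X ** transpose A - X" for X :: "real^'n^'n"
  have lin: "linear L" unfolding L_def by (rule lin_L)
  have inj: "inj L"
  proof (rule injI)
    fix X Y assume "L X = L Y"
    then have "L (X - Y) = 0" using linear_diff[OF lin] by simp
    then have "X - Y = A ** (X - Y) ** transpose A" unfolding L_def by simp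
    from conj_pow_zero[OF lim this] show "X = Y" by simp
  qed
  then have "surj L" using lin linear_inj_imp_surj by blast
  then obtain X where X: "L X = - (c *\<^sub>R U)" by (metis surjD)
  define S where "S = (1/2) *\<^sub>R (X + transpose X)"
  have "L (transpose X) = transpose (L X)"
    unfolding L_def by (simp add: matrix_transpose_mul transpose_diff' matrix_mul_assoc)
  then have LT: "L (transpose X) = - (c *\<^sub>R U)" using X U
    by (simp add: transpose_scalar transpose_def Finite_Cartesian_Product.vec_eq_iff)
  have "L S = (1/2) *\<^sub>R (L X + L (transpose X))"
    unfolding S_def using linear_add[OF lin] linear_scale[OF lin] by simp
  also have "\<dots> = - (c *\<^sub>R U)" using X LT by (simp add: scaleR_2[symmetric] del: scaleR_2)
  finally have LS: "L S = - (c *\<^sub>R U)" .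
  have TS: "transpose S = S" unfolding S_def
    by (simp add: transpose_scalar transpose_add' Finite_Cartesian_Product.transpose_transpose add.commute)
  show ?thesis
  proof (rule ex1I[of _ S])
    show "transpose S = S \<and> A ** S ** transpose A - S + c *\<^sub>R U = 0"
      using TS LS unfolding L_def by (simp add: algebra_simps)
  next
    fix S' assume "transpose S' = S' \<and> A ** S' ** transpose A - S' + c *\<^sub>R U = 0"
    then have "L S' = - (c *\<^sub>R U)" unfolding L_def by (simp add: algebra_simps eq_neg_iff_add_eq_0)
    with LS inj show "S' = S" by (metis injD)
  qed
qed

lemma dot_matvec: "y \<bullet> (A *v w) = (transpose A *v y) \<bullet> (w::real^'n)"
  by (simp add: dot_lmul_matrix transpose_matrix_vector)

lemma quad_conj: "y \<bullet> ((A ** S ** transpose A) *v y) = (transpose A *v y) \<bullet> (S *v (transpose A *v (y::real^'n)))"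
proof -
  have "(A ** S ** transpose A) *v y = A *v (S *v (transpose A *v y))" by (simp only: matrix_vector_mul_assoc matrix_mul_assoc)
  then show ?thesis by (simp add: dot_matvec)
qed

definition zvec :: "real^'n^'n \<Rightarrow> real^'n \<Rightarrow> nat \<Rightarrow> real^'n" where
  "zvec A x k = transpose (mpow A k) *v x"

lemma zvec_Suc: "zvec A x (Suc k) = transpose A *v zvec A x k"
  by (simp only: zvec_def mpow_Suc' matrix_transpose_mul matrix_vector_mul_assoc)

lemma zvec_0[simp]: "zvec A x 0 = x"
  by (simp add: zvec_def transpose_mat)

lemma lyap_iter:
  fixes A S U :: "real^'n^'n"
  assumes eq: "S = A ** S ** transpose A + c *\<^sub>R U"
  shows "x \<bullet> (S *v x) = zvec A x m \<bullet> (S *v zvec A x m) + c * (\<Sum>k<m. zvec A x k \<bullet> (U *v zvec A x k))"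
proof (induction m)
  case 0 then show ?case by simp
next
  case (Suc m)
  have "zvec A x m \<bullet> (S *v zvec A x m) = zvec A x m \<bullet> ((A ** S ** transpose A + c *\<^sub>R U) *v zvec A x m)"
    using eq by simp
  also have "\<dots> = zvec A x (Suc m) \<bullet> (S *v zvec A x (Suc m)) + c * (zvec A x m \<bullet> (U *v zvec A x m))"
    by (simp add: matrix_vector_mult_add_rdistrib inner_add_right quad_conj zvec_Suc
        scaleR_matrix_vector_assoc[symmetric])
  finally show ?case using Suc by (simp add: algebra_simps)
qed

lemma lyap_lower:
  fixes A S U :: "real^'n^'n"
  assumes lim: "(\<lambda>k. mpow A k) \<longlonglongrightarrow> 0"
    and eq: "A ** S ** transpose A - S + c *\<^sub>R U = 0"
    and c: "c > 0" and psd: "\<forall>y. 0 \<le> y \<bullet> (U *v y)"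
  shows "c * (zvec A x k \<bullet> (U *v zvec A x k)) \<le> x \<bullet> (S *v x)"
proof -
  have eq': "S = A ** S ** transpose A + c *\<^sub>R U" using eq by (simp add: algebra_simps)
  define g where "g m = zvec A x m \<bullet> (S *v zvec A x m)" for m
  have zlim: "(\<lambda>m. zvec A x m) \<longlonglongrightarrow> transpose 0 *v x"
    unfolding zvec_def by (intro tendsto_matvec tendsto_transpose lim tendsto_const)
  have "transpose (0::real^'n^'n) = 0" by (simp add: transpose_def Finite_Cartesian_Product.vec_eq_iff)
  then have zlim': "(\<lambda>m. zvec A x m) \<longlonglongrightarrow> 0" using zlim by simp
  have "g \<longlonglongrightarrow> 0 \<bullet> (S *v 0)"
    unfolding g_def by (intro tendsto_intros tendsto_matvec zlim')
  then have glim: "g \<longlonglongrightarrow> 0" by simp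
  have "\<forall>m\<ge>Suc k. g m \<le> x \<bullet> (S *v x) - c * (zvec A x k \<bullet> (U *v zvec A x k))"
  proof (intro allI impI)
    fix m assume m: "Suc k \<le> m"
    have "zvec A x k \<bullet> (U *v zvec A x k) \<le> (\<Sum>j<m. zvec A x j \<bullet> (U *v zvec A x j))"
      by (rule member_le_sum) (use m psd in auto)
    then have "c * (zvec A x k \<bullet> (U *v zvec A x k)) \<le> c * (\<Sum>j<m. zvec A x j \<bullet> (U *v zvec A x j))"
      using c by simp
    then show "g m \<le> x \<bullet> (S *v x) - c * (zvec A x k \<bullet> (U *v zvec A x k))"
      using lyap_iter[OF eq', of x m] unfolding g_def by linarith
  qed
  then have "0 \<le> x \<bullet> (S *v x) - c * (zvec A x k \<bullet> (U *v zvec A x k))"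
    using LIMSEQ_le_const2[OF glim] by blast
  then show ?thesis by simp
qed

lemma lyap_posdef:
  fixes A S U :: "real^'n^'n"
  assumes lim: "(\<lambda>k. mpow A k) \<longlonglongrightarrow> 0"
    and sym: "transpose S = S"
    and eq: "A ** S ** transpose A - S + c *\<^sub>R U = 0"
    and c: "c > 0" and psd: "\<forall>y. 0 \<le> y \<bullet> (U *v y)"
    and key: "\<And>x. x \<noteq> 0 \<Longrightarrow> \<exists>k. 0 < zvec A x k \<bullet> (U *v zvec A x k)"
  shows "pos_def S"
  unfolding pos_def_def
proof (intro conjI allI impI sym)
  fix x :: "real^'n" assume "x \<noteq> 0"
  then obtain k where k: "0 < zvec A x k \<bullet> (U *v zvec A x k)" using key by blast
  have "0 < c * (zvec A x k \<bullet> (U *v zvec A x k))" using c k by simp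
  also have "\<dots> \<le> x \<bullet> (S *v x)" by (rule lyap_lower[OF lim eq c psd])
  finally show "x \<bullet> (S *v x) > 0" .
qed



lemma quad_Emat: "y \<bullet> (Emat j *v y) = (y $ j)^2"
proof -
  have "Emat j *v y = (\<chi> i. if i = j then y $ j else 0)"
    by (simp add: Emat_def matrix_vector_mult_def Finite_Cartesian_Product.vec_eq_iff if_distrib if_distribR sum.delta cong: if_cong)
  then show ?thesis
    by (simp add: inner_vec_def if_distrib if_distribR sum.delta power2_eq_square cong: if_cong)
qed

lemma bl_quad: "bounded_linear (\<lambda>M::real^'n^'n. x \<bullet> (M *v x))"
  by (simp add: linear_conv_bounded_linear[symmetric] linearI matrix_vector_mult_add_rdistrib
     inner_add_right scaleR_matrix_vector_assoc[symmetric])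

lemma quad_sum: "y \<bullet> ((\<Sum>k\<in>K. f k *\<^sub>R Emat (mu k)) *v y) = (\<Sum>k\<in>K. f k * (y $ mu k)^2)"
proof -
  have "y \<bullet> ((\<Sum>k\<in>K. f k *\<^sub>R Emat (mu k)) *v y) = (\<Sum>k\<in>K. y \<bullet> ((f k *\<^sub>R Emat (mu k)) *v y))"
    using real_vector.linear_sum[OF bounded_linear.linear[OF bl_quad[of y]]] by simp
  also have "\<dots> = (\<Sum>k\<in>K. f k * (y $ mu k)^2)"
    by (simp add: scaleR_matrix_vector_assoc[symmetric] quad_Emat)
  finally show ?thesis .
qed

lemma quad_sum1: "y \<bullet> ((\<Sum>k\<in>K. Emat (mu k)) *v y) = (\<Sum>k\<in>K. (y $ mu k)^2)"
  using quad_sum[of y "\<lambda>_. 1" mu K] by simp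

lemma psd_zero:
  fixes U :: "real^'n^'n"
  assumes sym: "transpose U = U" and psd: "\<forall>y. 0 \<le> y \<bullet> (U *v y)" and z: "x \<bullet> (U *v x) = 0"
  shows "U *v x = 0"
proof (rule ccontr)
  assume ne: "U *v x \<noteq> 0"
  define y where "y = U *v x"
  define a where "a = y \<bullet> y"
  define b where "b = y \<bullet> (U *v y)"
  have a: "a > 0" using ne unfolding a_def y_def by simp
  have b: "b \<ge> 0" using psd unfolding b_def by simp
  have xy: "x \<bullet> (U *v y) = a" unfolding a_def y_def
    using dot_matvec[of x U y] sym by (simp add: y_def inner_commute)
  have yx: "y \<bullet> (U *v x) = a" unfolding a_def y_def by simp
  define t where "t = a / (b + 1)"
  have t: "t > 0" using a b unfolding t_def by simp
  have "0 \<le> (x - t *\<^sub>R y) \<bullet> (U *v (x - t *\<^sub>R y))" using psd by blast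
  also have "\<dots> = x \<bullet> (U *v x) - t * (x \<bullet> (U *v y)) - t * (y \<bullet> (U *v x)) + t * t * (y \<bullet> (U *v y))"
    by (simp add: matrix_vector_mult_diff_distrib matrix_scaleR_vector_ac[symmetric]
        scaleR_matrix_vector_assoc[symmetric] inner_diff_left inner_diff_right algebra_simps)
  also have "\<dots> = t * (t * b - 2 * a)" using z xy yx unfolding b_def by (simp add: algebra_simps)
  finally have "0 \<le> t * b - 2 * a" using t by (simp add: zero_le_mult_iff)
  moreover have "t * b \<le> a" using a b unfolding t_def by (simp add: field_simps)
  ultimately show False using a by linarith
qed

lemma DIM_cart1: "DIM(real^'n) = CARD('n)" by simp

lemma krylov_key:
  fixes A :: "real^'n^'n"
  assumes kd: "krylov_dim A (uvec j) = CARD('n)" and x: "x \<noteq> 0"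
  shows "\<exists>m. zvec A x m $ j \<noteq> 0"
proof (rule ccontr)
  assume "\<not> ?thesis"
  then have z: "\<forall>m. zvec A x m $ j = 0" by simp
  define B where "B = range (\<lambda>m::nat. (((*v) A) ^^ m) (uvec j))"
  have orth: "orthogonal x y" if "y \<in> B" for y
  proof -
    from that obtain m where y: "y = mpow A m *v uvec j" unfolding B_def by (auto simp: krylov_mpow)
    have "x \<bullet> y = (transpose (mpow A m) *v x) \<bullet> uvec j" unfolding y by (rule dot_matvec)
    also have "\<dots> = zvec A x m $ j" unfolding zvec_def uvec_def by (simp add: cart_eq_inner_axis)
    finally show ?thesis using z by (simp add: Linear_Algebra.orthogonal_def)
  qed
  have "dim B = CARD('n)" using kd unfolding krylov_dim_def B_def by (simp add: dim_span)
  then have "span B = UNIV" using dim_eq_full[of B] by simp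
  then have "x \<in> span B" by simp
  then have "orthogonal x x" using orthogonal_to_span orth by blast
  then show False using x by (simp add: Linear_Algebra.orthogonal_def)
qed



lemma loewner_quad:
  assumes "loewner_ge U (c *\<^sub>R E)"
  shows "c * (y \<bullet> (E *v y)) \<le> y \<bullet> (U *v (y::real^'n))"
proof -
  have "0 \<le> y \<bullet> ((U - c *\<^sub>R E) *v y)" using assms unfolding loewner_ge_def pos_semidef_def by blast
  then show ?thesis
    by (simp add: matrix_vector_mult_diff_rdistrib inner_diff_right scaleR_matrix_vector_assoc[symmetric])
qed

lemma orth_inv:
  fixes H :: "real^'n^'n"
  assumes "orthogonal_matrix H"
  shows "matrix_inv H = transpose H"
proof -
  have o: "transpose H ** H = mat 1" "H ** transpose H = mat 1"
    using assms unfolding orthogonal_matrix_def by auto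
  show ?thesis unfolding matrix_inv_def
  proof (rule some_equality)
    show "H ** transpose H = mat 1 \<and> transpose H ** H = mat 1" using o by simp
  next
    fix A' assume "H ** A' = mat 1 \<and> A' ** H = mat 1"
    then have "A' = A' ** (H ** transpose H)" and "A' ** H = mat 1" using o by auto
    then show "A' = transpose H" by (simp add: matrix_mul_assoc)
  qed
qed

lemma mpow_conj:
  fixes H A :: "real^'n^'n"
  assumes o: "transpose H ** H = mat 1"
  shows "mpow (H ** A ** transpose H) m = H ** mpow A m ** transpose H \<or> m = 0"
proof (induction m)
  case 0 then show ?case by simp
next
  case (Suc m)
  show ?case
  proof (cases m)
    case 0 then show ?thesis by (simp add: mpow_Suc)
  next
    case (Suc m')
    then have IH: "mpow (H ** A ** transpose H) m = H ** mpow A m ** transpose H" using Suc.IH by simp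
    have "mpow (H ** A ** transpose H) (Suc m) = H ** A ** (transpose H ** H) ** mpow A m ** transpose H"
      by (simp add: mpow_Suc IH matrix_mul_assoc)
    also have "\<dots> = H ** mpow A (Suc m) ** transpose H" using o by (simp add: mpow_Suc matrix_mul_assoc)
    finally show ?thesis by simp
  qed
qed

lemma zvec_conj:
  fixes H A :: "real^'n^'n"
  assumes o: "transpose H ** H = mat 1"
  shows "zvec (H ** A ** transpose H) (H *v x) m = H *v zvec A x m"
proof (cases "m = 0")
  case True then show ?thesis by simp
next
  case False
  then have e: "mpow (H ** A ** transpose H) m = H ** mpow A m ** transpose H" using mpow_conj[OF o] by blast
  have "transpose (H ** mpow A m ** transpose H) *v (H *v x) = H ** transpose (mpow A m) ** (transpose H ** H) *v x"
    by (simp only: matrix_transpose_mul Finite_Cartesian_Product.transpose_transpose matrix_vector_mul_assoc matrix_mul_assoc)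
  also have "\<dots> = H *v (transpose (mpow A m) *v x)" by (simp only: assms matrix_mul_rid matrix_vector_mul_assoc)
  finally show ?thesis unfolding zvec_def e .
qed

lemma case_key:
  fixes A U :: "real^'n^'n"
  assumes sym: "transpose U = U" and psd: "\<forall>y. 0 \<le> y \<bullet> (U *v y)"
    and cases:
      "rank U = CARD('n)
       \<or> (\<exists>H lam mu k. orthogonal_matrix H
            \<and> H ** U ** transpose H
                = (\<Sum>k'\<in>{1..rank U}. lam k' *\<^sub>R Emat (mu k'))
            \<and> (\<forall>k'\<in>{1..rank U}. lam k' > (0::real))
            \<and> inj_on mu {1..rank U}
            \<and> k \<in> {1..rank U}
            \<and> krylov_dim (H ** A ** matrix_inv H) (uvec (mu k)) = CARD('n))
       \<or> (\<exists>lamT omb mub. lamT > (0::real) \<and> omb \<le> rank U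
            \<and> inj_on mub {1..omb}
            \<and> loewner_ge U (lamT *\<^sub>R (\<Sum>k'\<in>{1..omb}. Emat (mub k')))
            \<and> omb = CARD('n))
       \<or> (\<exists>lamT omb mub k. lamT > (0::real) \<and> omb \<le> rank U
            \<and> inj_on mub {1..omb}
            \<and> loewner_ge U (lamT *\<^sub>R (\<Sum>k'\<in>{1..omb}. Emat (mub k')))
            \<and> k \<in> {1..omb}
            \<and> krylov_dim A (uvec (mub k)) = CARD('n))"
    and x: "x \<noteq> 0"
  shows "\<exists>k. 0 < zvec A x k \<bullet> (U *v zvec A x k)"
  using cases
proof (elim disjE exE conjE)
  assume "rank U = CARD('n)"
  then have "inj ((*v) U)" by (simp add: full_rank_injective)
  then have "U *v x \<noteq> 0" using x by (metis injD matrix_vector_mult_0_right)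
  then have "x \<bullet> (U *v x) \<noteq> 0" using psd_zero[OF sym psd] by blast
  then have "0 < x \<bullet> (U *v x)" using psd by (metis order_le_less)
  then show ?thesis by (intro exI[of _ 0]) simp
next
  fix lamT omb mub
  assume lam: "lamT > 0" and inj: "inj_on mub {1..omb}"
    and lw: "loewner_ge U (lamT *\<^sub>R (\<Sum>k'\<in>{1..omb}. Emat (mub k')))" and om: "omb = CARD('n)"
  have "card (mub ` {1..omb}) = CARD('n)" using card_image[OF inj] om by simp
  then have img: "mub ` {1..omb} = UNIV" by (intro card_subset_eq) auto
  have "(\<Sum>k'\<in>{1..omb}. (x $ mub k')^2) = (\<Sum>j\<in>mub ` {1..omb}. (x $ j)^2)"
    using sum.reindex[OF inj, of "\<lambda>j. (x $ j)^2"] by simp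
  also have "\<dots> = x \<bullet> x" unfolding img by (simp add: inner_vec_def power2_eq_square)
  finally have s: "(\<Sum>k'\<in>{1..omb}. (x $ mub k')^2) = x \<bullet> x" .
  have "lamT * (x \<bullet> x) \<le> x \<bullet> (U *v x)"
    using loewner_quad[OF lw, of x] unfolding quad_sum1 s .
  moreover have "0 < lamT * (x \<bullet> x)" using lam x by simp
  ultimately show ?thesis by (intro exI[of _ 0]) simp
next
  fix lamT omb mub k
  assume lam: "lamT > 0"
    and lw: "loewner_ge U (lamT *\<^sub>R (\<Sum>k'\<in>{1..omb}. Emat (mub k')))" and k: "k \<in> {1..(omb::nat)}"
    and kd: "krylov_dim A (uvec (mub k)) = CARD('n)"
  obtain m where m: "zvec A x m $ mub k \<noteq> 0" using krylov_key[OF kd x] by blast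
  let ?y = "zvec A x m"
  have "(?y $ mub k)^2 \<le> (\<Sum>k'\<in>{1..omb}. (?y $ mub k')^2)"
    by (rule member_le_sum) (use k in auto)
  then have "lamT * (?y $ mub k)^2 \<le> lamT * (\<Sum>k'\<in>{1..omb}. (?y $ mub k')^2)"
    using lam by simp
  also have "\<dots> \<le> ?y \<bullet> (U *v ?y)" using loewner_quad[OF lw, of ?y] unfolding quad_sum1 .
  finally have "lamT * (?y $ mub k)^2 \<le> ?y \<bullet> (U *v ?y)" .
  moreover have "0 < lamT * (?y $ mub k)^2" using lam m by simp
  ultimately show ?thesis by (intro exI[of _ m]) simp
next
  fix H lam mu k
  assume o: "orthogonal_matrix H"
    and HU: "H ** U ** transpose H = (\<Sum>k'\<in>{1..rank U}. lam k' *\<^sub>R Emat (mu k'))"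
    and lpos: "\<forall>k'\<in>{1..rank U}. lam k' > (0::real)"
    and k: "k \<in> {1..rank U}"
    and kd: "krylov_dim (H ** A ** matrix_inv H) (uvec (mu k)) = CARD('n)"
  have o1: "transpose H ** H = mat 1" "H ** transpose H = mat 1" using o unfolding orthogonal_matrix_def by auto
  define B where "B = H ** A ** transpose H"
  have kd': "krylov_dim B (uvec (mu k)) = CARD('n)" using kd orth_inv[OF o] unfolding B_def by simp
  have "transpose H *v (H *v x) = x" using o1 by (simp add: matrix_vector_mul_assoc)
  then have Hx: "H *v x \<noteq> 0" using x by auto
  obtain m where m: "zvec B (H *v x) m $ mu k \<noteq> 0" using krylov_key[OF kd' Hx] by blast
  let ?y = "zvec A x m"
  have zy: "zvec B (H *v x) m = H *v ?y" unfolding B_def by (rule zvec_conj[OF o1(1)])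
  have hback: "transpose H *v (H *v ?y) = ?y" using o1 by (simp add: matrix_vector_mul_assoc)
  have "(H *v ?y) \<bullet> ((H ** U ** transpose H) *v (H *v ?y)) = ?y \<bullet> (U *v ?y)"
    unfolding quad_conj hback ..
  then have eq: "?y \<bullet> (U *v ?y) = (\<Sum>k'\<in>{1..rank U}. lam k' * ((H *v ?y) $ mu k')^2)"
    unfolding HU quad_sum by simp
  have "lam k * ((H *v ?y) $ mu k)^2 \<le> (\<Sum>k'\<in>{1..rank U}. lam k' * ((H *v ?y) $ mu k')^2)"
    by (rule member_le_sum) (use k lpos in \<open>auto intro!: mult_nonneg_nonneg simp: less_imp_le\<close>)
  moreover have "0 < lam k * ((H *v ?y) $ mu k)^2" using lpos k m zy by simp
  ultimately show ?thesis using eq by (intro exI[of _ m]) simp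
qed



lemma bl_matvec: "bounded_linear (\<lambda>M::real^'n^'n. M *v v)"
  by (simp add: linear_conv_bounded_linear[symmetric] linearI matrix_vector_mult_add_rdistrib
     scaleR_matrix_vector_assoc[symmetric])

lemma quad_bound:
  fixes M :: "real^'n^'n"
  assumes "norm M \<le> B"
  shows "\<bar>y \<bullet> (M *v y)\<bar> \<le> (real CARD('n) * real CARD('n) * B) * (y \<bullet> y)"
proof -
  have "\<bar>M $ i $ j\<bar> \<le> B" for i j
  proof -
    have "\<bar>M $ i $ j\<bar> \<le> norm (M $ i)" by (rule component_le_norm_cart)
    also have "\<dots> \<le> norm M" by (rule Finite_Cartesian_Product.norm_nth_le)
    finally show ?thesis using assms by simp
  qed
  then have on: "onorm ((*v) M) \<le> real CARD('n) * real CARD('n) * B"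
    by (rule onorm_le_matrix_component)
  have "\<bar>y \<bullet> (M *v y)\<bar> \<le> norm y * norm (M *v y)" by (rule Cauchy_Schwarz_ineq2)
  also have "norm (M *v y) \<le> onorm ((*v) M) * norm y"
    by (rule onorm) (rule matrix_vector_mul_bounded_linear)
  then have "norm y * norm (M *v y) \<le> norm y * (onorm ((*v) M) * norm y)"
    by (simp add: mult_left_mono)
  also have "\<dots> \<le> norm y * ((real CARD('n) * real CARD('n) * B) * norm y)"
    by (intro mult_left_mono mult_right_mono on) auto
  also have "\<dots> = (real CARD('n) * real CARD('n) * B) * (y \<bullet> y)"
    by (simp add: power2_norm_eq_inner[symmetric] power2_eq_square)
  finally show ?thesis .
qed

lemma fund_inj:
  fixes D Phi :: "real \<Rightarrow> real^'n^'n"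
  assumes D_cont: "continuous_on {0..} D" and fund: "fundamental_matrix D Phi"
    and t: "t \<ge> 0" and v: "Phi t *v v = 0"
  shows "v = 0"
proof -
  have P0: "Phi 0 = mat 1" and der: "\<And>s. s \<ge> 0 \<Longrightarrow> (Phi has_vector_derivative (D s ** Phi s)) (at s within {0..})"
    using fund unfolding fundamental_matrix_def by auto
  have "compact (D ` {0..t})"
    by (rule compact_continuous_image[OF continuous_on_subset[OF D_cont]]) auto
  then obtain B0 where B0: "\<And>s. s \<in> {0..t} \<Longrightarrow> norm (D s) \<le> B0"
    using compact_imp_bounded bounded_iff by (metis imageI)
  define K where "K = real CARD('n) * real CARD('n) * B0"
  have Kb: "\<bar>y \<bullet> (D s *v y)\<bar> \<le> K * (y \<bullet> y)" if "s \<in> {0..t}" for s y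
    unfolding K_def by (rule quad_bound[OF B0[OF that]])
  define x where "x s = Phi s *v v" for s
  define f where "f s = x s \<bullet> x s" for s
  define g where "g s = exp (2 * K * s) * f s" for s
  have fder: "(f has_real_derivative (2 * (x s \<bullet> (D s *v x s)))) (at s within {0..})" if "s \<ge> 0" for s
  proof -
    have "(Phi has_derivative (\<lambda>h. h *\<^sub>R (D s ** Phi s))) (at s within {0..})"
      using der[OF that] unfolding has_vector_derivative_def .
    from bounded_linear.has_derivative[OF bl_matvec[of v] this]
    have xd: "(x has_derivative (\<lambda>h. (h *\<^sub>R (D s ** Phi s)) *v v)) (at s within {0..})"
      unfolding x_def .
    have "(f has_derivative (\<lambda>h. x s \<bullet> ((h *\<^sub>R (D s ** Phi s)) *v v) + ((h *\<^sub>R (D s ** Phi s)) *v v) \<bullet> x s)) (at s within {0..})"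
      unfolding f_def by (rule has_derivative_inner[OF xd xd])
    then show ?thesis unfolding has_field_derivative_def
      by (rule has_derivative_eq_rhs)
         (auto simp: x_def scaleR_matrix_vector_assoc[symmetric] matrix_vector_mul_assoc[symmetric]
           inner_commute[of "Phi s *v v"] fun_eq_iff algebra_simps)
  qed
  have fcont: "continuous_on {0..t} f"
  proof -
    have "continuous (at s within {0..}) f" if "s \<in> {0..}" for s
      using fder[of s] that by (auto intro: DERIV_continuous)
    then have "continuous_on {0..} f" using continuous_on_eq_continuous_within by blast
    then show ?thesis by (rule continuous_on_subset) auto
  qed
  have gcont: "continuous_on {0..t} g" unfolding g_def
    by (intro continuous_intros fcont)
  have "g 0 \<le> g t"
  proof (rule DERIV_nonneg_imp_increasing_open[OF t _ gcont])
    fix s assume s: "0 < s" "s < t"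
    have fd: "(f has_real_derivative (2 * (x s \<bullet> (D s *v x s)))) (at s)"
    proof -
      have h: "(f has_real_derivative (2 * (x s \<bullet> (D s *v x s)))) (at s within {0<..})"
        by (rule DERIV_subset[OF fder[of s]]) (use s in auto)
      have ae: "at s within {0<..} = at s" by (rule at_within_open) (use s in auto)
      from h show ?thesis unfolding ae .
    qed
    have ed: "((\<lambda>s. exp (2 * K * s)) has_real_derivative (exp (2 * K * s) * (2 * K))) (at s)"
      by (rule derivative_eq_intros refl | simp)+
    have gd: "(g has_real_derivative (exp (2 * K * s) * (2 * K) * f s + (2 * (x s \<bullet> (D s *v x s))) * exp (2 * K * s))) (at s)"
      unfolding g_def by (rule DERIV_mult[OF ed fd])
    have sI: "s \<in> {0..t}" using s by simp
    have "\<bar>x s \<bullet> (D s *v x s)\<bar> \<le> K * f s" using Kb[OF sI, of "x s"] unfolding f_def .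
    then have "0 \<le> 2 * K * f s + 2 * (x s \<bullet> (D s *v x s))" by linarith
    then have "0 \<le> exp (2 * K * s) * (2 * K) * f s + (2 * (x s \<bullet> (D s *v x s))) * exp (2 * K * s)"
      using mult_nonneg_nonneg[of "exp (2 * K * s)" "2 * K * f s + 2 * (x s \<bullet> (D s *v x s))"]
      by (simp add: algebra_simps)
    with gd show "\<exists>y. (g has_real_derivative y) (at s) \<and> 0 \<le> y" by blast
  qed
  moreover have "g t = 0" unfolding g_def f_def x_def using v by simp
  moreover have "g 0 = v \<bullet> v" unfolding g_def f_def x_def using P0 by simp
  ultimately have "v \<bullet> v \<le> 0" by simp
  then show ?thesis using inner_ge_zero[of v] by (metis inner_eq_zero_iff order.antisym)
qed

lemma fund_invertible:
  fixes D Phi :: "real \<Rightarrow> real^'n^'n"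
  assumes D_cont: "continuous_on {0..} D" and fund: "fundamental_matrix D Phi" and t: "t \<ge> 0"
  shows "invertible (Phi t)"
proof -
  have "inj ((*v) (Phi t))"
    by (rule injI) (metis fund_inj[OF D_cont fund t] matrix_vector_mult_diff_distrib eq_iff_diff_eq_0)
  then obtain B where "B ** Phi t = mat 1" using matrix_left_invertible_injective by blast
  then show ?thesis using matrix_left_right_inverse unfolding invertible_def by blast
qed




lemma bl_transpose: "bounded_linear (transpose :: real^'n^'n \<Rightarrow> real^'n^'n)"
  by (simp add: linear_conv_bounded_linear[symmetric] linearI transpose_add' transpose_scalar)


lemma integral_psd:
  fixes F :: "real \<Rightarrow> real^'n^'n"
  assumes sym: "\<And>s. transpose (F s) = F s" and psd: "\<And>s y. 0 \<le> y \<bullet> (F s *v y)"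
  shows "transpose (integral S F) = integral S F \<and> 0 \<le> x \<bullet> (integral S F *v x)"
proof (cases "F integrable_on S")
  case True
  have "transpose (integral S F) = integral S (transpose \<circ> F)"
    using integral_linear[OF True bl_transpose] by simp
  also have "\<dots> = integral S F" using sym by (simp add: o_def)
  finally have 1: "transpose (integral S F) = integral S F" .
  have "x \<bullet> (integral S F *v x) = integral S ((\<lambda>M. x \<bullet> (M *v x)) \<circ> F)"
    using integral_linear[OF True bl_quad] by simp
  also have "\<dots> \<ge> 0"
    by (rule integral_nonneg) (use integrable_linear[OF True bl_quad] psd in auto)
  finally show ?thesis using 1 by simp
next
  case False
  then show ?thesis by (simp add: not_integrable_integral transpose_def Finite_Cartesian_Product.vec_eq_iff)
qed

lemma Upsilon_props:
  "transpose (Upsilon Phi Lam t) = Upsilon Phi Lam t \<and> 0 \<le> x \<bullet> (Upsilon Phi Lam t *v x)"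
  unfolding Upsilon_def Let_def
proof (rule integral_psd)
  fix s
  show "transpose (Phi t ** matrix_inv (Phi s) ** Lam s ** transpose (Phi t ** matrix_inv (Phi s) ** Lam s)) =
    Phi t ** matrix_inv (Phi s) ** Lam s ** transpose (Phi t ** matrix_inv (Phi s) ** Lam s)"
    by (simp only: matrix_transpose_mul Finite_Cartesian_Product.transpose_transpose matrix_mul_assoc)
  fix y
  let ?M = "Phi t ** matrix_inv (Phi s) ** Lam s"
  have "?M ** transpose ?M *v y = ?M *v (transpose ?M *v y)" by (simp only: matrix_vector_mul_assoc)
  then have "y \<bullet> (?M ** transpose ?M *v y) = (transpose ?M *v y) \<bullet> (transpose ?M *v y)"
    by (simp only: dot_lmul_matrix[symmetric] transpose_matrix_vector)
  then show "0 \<le> y \<bullet> (?M ** transpose ?M *v y)" by simp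
qed

theorem corollary4p1:
  fixes D :: "real \<Rightarrow> real^'n^'n"
    and Lam :: "real \<Rightarrow> real^('N::finite)^'n"
    and Phi :: "real \<Rightarrow> real^'n^'n"
    and \<theta> \<epsilon> :: real
  assumes theta_pos: "\<theta> > 0"
    and eps_pos: "\<epsilon> > 0"
    and D_cont: "continuous_on {0..} D"
    and Lam_cont: "continuous_on {0..} Lam"
    and D_per: "\<forall>t\<ge>0. D (t + \<theta>) = D t"
    and Lam_per: "\<forall>t\<ge>0. Lam (t + \<theta>) = Lam t"
    and fund: "fundamental_matrix D Phi"
    and CM: "Phi \<theta> \<in> CMbar"
    and cases:
      "rank (Upsilon Phi Lam \<theta>) = CARD('n)
       \<or> (\<exists>H lam mu k. orthogonal_matrix H
            \<and> H ** Upsilon Phi Lam \<theta> ** transpose H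
                = (\<Sum>k'\<in>{1..rank (Upsilon Phi Lam \<theta>)}. lam k' *\<^sub>R Emat (mu k'))
            \<and> (\<forall>k'\<in>{1..rank (Upsilon Phi Lam \<theta>)}. lam k' > (0::real))
            \<and> inj_on mu {1..rank (Upsilon Phi Lam \<theta>)}
            \<and> k \<in> {1..rank (Upsilon Phi Lam \<theta>)}
            \<and> krylov_dim (H ** Phi \<theta> ** matrix_inv H) (uvec (mu k)) = CARD('n))
       \<or> (\<exists>lamT omb mub. lamT > (0::real) \<and> omb \<le> rank (Upsilon Phi Lam \<theta>)
            \<and> inj_on mub {1..omb}
            \<and> loewner_ge (Upsilon Phi Lam \<theta>) (lamT *\<^sub>R (\<Sum>k'\<in>{1..omb}. Emat (mub k')))
            \<and> omb = CARD('n))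
       \<or> (\<exists>lamT omb mub k. lamT > (0::real) \<and> omb \<le> rank (Upsilon Phi Lam \<theta>)
            \<and> inj_on mub {1..omb}
            \<and> loewner_ge (Upsilon Phi Lam \<theta>) (lamT *\<^sub>R (\<Sum>k'\<in>{1..omb}. Emat (mub k')))
            \<and> k \<in> {1..omb}
            \<and> krylov_dim (Phi \<theta>) (uvec (mub k)) = CARD('n))"
  shows "\<forall>t\<ge>0. pos_def (Sigma_d Phi Lam \<theta> \<epsilon> t)"
proof (intro allI impI)
  fix t :: real assume t: "t \<ge> 0"
  define A where "A = Phi \<theta>"
  define U where "U = Upsilon Phi Lam \<theta>"
  have decay: "(\<lambda>k. mpow A k) \<longlonglongrightarrow> 0" unfolding A_def by (rule CMbar_decay[OF CM])
  have symU: "transpose U = U" and psdU: "\<forall>y. 0 \<le> y \<bullet> (U *v y)"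
    unfolding U_def using Upsilon_props by blast+
  define S0 where "S0 = Sigma_d0 Phi Lam \<theta> \<epsilon>"
  have S0: "transpose S0 = S0 \<and> A ** S0 ** transpose A - S0 + \<epsilon> *\<^sub>R U = 0"
    unfolding S0_def Sigma_d0_def A_def[symmetric] U_def[symmetric]
    by (rule theI'[OF lyap_ex1[OF decay symU]])
  have key: "\<exists>k. 0 < zvec A x k \<bullet> (U *v zvec A x k)" if "x \<noteq> 0" for x
    by (rule case_key[OF symU psdU cases[folded A_def U_def] that])
  have pdS0: "pos_def S0"
    using S0 by (intro lyap_posdef[OF decay _ _ eps_pos psdU key]) auto
  define P where "P = Phi t"
  have "invertible (transpose P)" unfolding P_def
    by (rule transpose_invertible[OF fund_invertible[OF D_cont fund t]])
  then have injP: "inj ((*v) (transpose P))" by (rule inj_matrix_vector_mult)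
  define Ut where "Ut = Upsilon Phi Lam t"
  have symUt: "transpose Ut = Ut" and psdUt: "\<And>y. 0 \<le> y \<bullet> (Ut *v y)"
    unfolding Ut_def using Upsilon_props by blast+
  have SD: "Sigma_d Phi Lam \<theta> \<epsilon> t = P ** S0 ** transpose P + \<epsilon> *\<^sub>R Ut"
    unfolding Sigma_d_def P_def S0_def Ut_def ..
  show "pos_def (Sigma_d Phi Lam \<theta> \<epsilon> t)"
    unfolding SD pos_def_def
  proof (intro conjI allI impI)
    show "transpose (P ** S0 ** transpose P + \<epsilon> *\<^sub>R Ut) = P ** S0 ** transpose P + \<epsilon> *\<^sub>R Ut"
      using S0 symUt by (simp add: transpose_add' transpose_scalar matrix_transpose_mul matrix_mul_assoc)
    fix x :: "real^'n" assume x: "x \<noteq> 0"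
    have Px: "transpose P *v x \<noteq> 0" using injP x by (metis injD matrix_vector_mult_0_right)
    have "0 < (transpose P *v x) \<bullet> (S0 *v (transpose P *v x))"
      using pdS0 Px unfolding pos_def_def by blast
    also have "\<dots> = x \<bullet> ((P ** S0 ** transpose P) *v x)" by (rule quad_conj[symmetric])
    also have "\<dots> \<le> x \<bullet> ((P ** S0 ** transpose P + \<epsilon> *\<^sub>R Ut) *v x)"
      using psdUt[of x] eps_pos
      by (simp add: matrix_vector_mult_add_rdistrib inner_add_right scaleR_matrix_vector_assoc[symmetric])
    finally show "0 < x \<bullet> ((P ** S0 ** transpose P + \<epsilon> *\<^sub>R Ut) *v x)" .
  qed
qed

end
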